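(* If $G$ is a chordal graph of treewidth $w$ and with a resolving set of size $k$, then $w\leq 3^k$.
   Context: A graph is chordal if it has no induced cycle of length at least $4$. A set $R$ of vertices of a graph $G$ is a resolving set if for each pair $u,v$ of distinct vertices there is $x\in R$ with $d(x,u)\neq d(x,v)$. *)

theory Defs
  imports Main
begin

definition graph :: "'a set \<Rightarrow> ('a \<Rightarrow> 'a \<Rightarrow> bool) \<Rightarrow> bool" where
  "graph V E \<longleftrightarrow> finite V \<and> (\<forall>x y. E x y \<longrightarrow> E y x) \<and> (\<forall>x. \<not> E x x)
     \<and> (\<forall>x y. E x y \<longrightarrow> x \<in> V \<and> y \<in> V)"

definition is_path :: "('a \<Rightarrow> 'a \<Rightarrow> bool) \<Rightarrow> 'a list \<Rightarrow> bool" where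
  "is_path E xs \<longleftrightarrow> xs \<noteq> [] \<and> distinct xs \<and> (\<forall>i. Suc i < length xs \<longrightarrow> E (xs ! i) (xs ! Suc i))"

definition connected_on :: "'a set \<Rightarrow> ('a \<Rightarrow> 'a \<Rightarrow> bool) \<Rightarrow> bool" where
  "connected_on S E \<longleftrightarrow> (\<forall>u\<in>S. \<forall>v\<in>S. \<exists>xs. is_path E xs \<and> hd xs = u \<and> last xs = v \<and> set xs \<subseteq> S)"

text \<open>Distance: number of edges of a shortest path (for connected graphs).\<close>

definition gdist :: "('a \<Rightarrow> 'a \<Rightarrow> bool) \<Rightarrow> 'a \<Rightarrow> 'a \<Rightarrow> nat" where
  "gdist E u v = (LEAST n. \<exists>xs. is_path E xs \<and> hd xs = u \<and> last xs = v \<and> length xs = Suc n)"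

definition is_cycle :: "('a \<Rightarrow> 'a \<Rightarrow> bool) \<Rightarrow> 'a list \<Rightarrow> bool" where
  "is_cycle E xs \<longleftrightarrow> length xs \<ge> 3 \<and> is_path E xs \<and> E (last xs) (hd xs)"

definition induced_cycle :: "'a set \<Rightarrow> ('a \<Rightarrow> 'a \<Rightarrow> bool) \<Rightarrow> 'a list \<Rightarrow> bool" where
  "induced_cycle V E xs \<longleftrightarrow> is_cycle E xs \<and> set xs \<subseteq> V \<and>
     (\<forall>i<length xs. \<forall>j<length xs. E (xs ! i) (xs ! j) \<longrightarrow>
        j = Suc i mod length xs \<or> i = Suc j mod length xs)"

definition chordal :: "'a set \<Rightarrow> ('a \<Rightarrow> 'a \<Rightarrow> bool) \<Rightarrow> bool" where
  "chordal V E \<longleftrightarrow> \<not> (\<exists>xs. induced_cycle V E xs \<and> length xs \<ge> 4)"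

definition resolving_set :: "'a set \<Rightarrow> ('a \<Rightarrow> 'a \<Rightarrow> bool) \<Rightarrow> 'a set \<Rightarrow> bool" where
  "resolving_set V E R \<longleftrightarrow> R \<subseteq> V \<and>
     (\<forall>u\<in>V. \<forall>v\<in>V. u \<noteq> v \<longrightarrow> (\<exists>x\<in>R. gdist E x u \<noteq> gdist E x v))"

definition is_tree :: "nat set \<Rightarrow> (nat \<Rightarrow> nat \<Rightarrow> bool) \<Rightarrow> bool" where
  "is_tree N T \<longleftrightarrow> graph N T \<and> N \<noteq> {} \<and> connected_on N T \<and> \<not> (\<exists>xs. is_cycle T xs)"

definition tree_decomposition ::
  "'a set \<Rightarrow> ('a \<Rightarrow> 'a \<Rightarrow> bool) \<Rightarrow> nat set \<Rightarrow> (nat \<Rightarrow> nat \<Rightarrow> bool) \<Rightarrow> (nat \<Rightarrow> 'a set) \<Rightarrow> bool" where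
  "tree_decomposition V E N T B \<longleftrightarrow> is_tree N T \<and>
     (\<forall>t\<in>N. B t \<subseteq> V) \<and>
     (\<forall>v\<in>V. \<exists>t\<in>N. v \<in> B t) \<and>
     (\<forall>u v. E u v \<longrightarrow> (\<exists>t\<in>N. u \<in> B t \<and> v \<in> B t)) \<and>
     (\<forall>v\<in>V. connected_on {t\<in>N. v \<in> B t} T)"

definition decomp_width :: "nat set \<Rightarrow> (nat \<Rightarrow> 'a set) \<Rightarrow> nat" where
  "decomp_width N B = Max ((\<lambda>t. card (B t)) ` N) - 1"

definition treewidth :: "'a set \<Rightarrow> ('a \<Rightarrow> 'a \<Rightarrow> bool) \<Rightarrow> nat" where
  "treewidth V E = (LEAST w. \<exists>N T B. tree_decomposition V E N T B \<and> decomp_width N B = w)"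

end

theory Submission
  imports Defs
begin

lemma path_mono: "(\<And>x y. E x y \<Longrightarrow> E' x y) \<Longrightarrow> is_path E xs \<Longrightarrow> is_path E' xs"
  unfolding is_path_def by blast

lemma path_single: "is_path E [x]"
  unfolding is_path_def by simp

lemma path_drop:
  assumes "is_path E P" "k < length P"
  shows "is_path E (drop k P)" "hd (drop k P) = P ! k" "last (drop k P) = last P" "set (drop k P) \<subseteq> set P"
proof -
  show "is_path E (drop k P)" using assms unfolding is_path_def
    by (auto simp: add.commute)
  show "hd (drop k P) = P ! k" using assms by (simp add: hd_drop_conv_nth)
  show "last (drop k P) = last P" using assms by simp
  show "set (drop k P) \<subseteq> set P" by (simp add: set_drop_subset)
qed

lemma path_take:
  assumes "is_path E P" "k < length P"
  shows "is_path E (take (Suc k) P)" "hd (take (Suc k) P) = hd P" "last (take (Suc k) P) = P ! k" "set (take (Suc k) P) \<subseteq> set P"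
    "length (take (Suc k) P) = Suc k"
proof -
  show "is_path E (take (Suc k) P)" using assms unfolding is_path_def
    by auto
  show "hd (take (Suc k) P) = hd P" using assms by (cases P) auto
  show "last (take (Suc k) P) = P ! k" using assms proof -
    have "take (Suc k) P \<noteq> []" using assms by auto
    then have "last (take (Suc k) P) = take (Suc k) P ! (length (take (Suc k) P) - 1)" by (rule last_conv_nth)
    also have "length (take (Suc k) P) - 1 = k" using assms by simp
    finally show ?thesis by simp
  qed
  show "set (take (Suc k) P) \<subseteq> set P" by (simp add: set_take_subset)
  show "length (take (Suc k) P) = Suc k" using assms by simp
qed

lemma path_snoc:
  assumes "is_path E P" "v \<notin> set P" "E (last P) v"
  shows "is_path E (P @ [v])"
  unfolding is_path_def
proof (intro conjI allI impI)
  have ne: "P \<noteq> []" and d: "distinct P" and ed: "\<And>i. Suc i < length P \<Longrightarrow> E (P!i) (P!Suc i)"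
    using assms(1) unfolding is_path_def by auto
  show "P @ [v] \<noteq> []" by simp
  show "distinct (P @ [v])" using d assms(2) by simp
  fix i assume i: "Suc i < length (P @ [v])"
  show "E ((P @ [v]) ! i) ((P @ [v]) ! Suc i)"
  proof (cases "Suc i < length P")
    case True then show ?thesis using ed[OF True] by (simp add: nth_append)
  next
    case False
    then have "Suc i = length P" using i by simp
    moreover have "length P - 1 = i" using \<open>Suc i = length P\<close> by simp
    then have "last P = P ! i" using ne by (simp add: last_conv_nth)
    ultimately show ?thesis using assms(3) by (simp add: nth_append)
  qed
qed

lemma path_cons:
  assumes "is_path E P" "v \<notin> set P" "E v (hd P)"
  shows "is_path E (v # P)"
  unfolding is_path_def
proof (intro conjI allI impI)
  have ne: "P \<noteq> []" and d: "distinct P" and ed: "\<And>i. Suc i < length P \<Longrightarrow> E (P!i) (P!Suc i)"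
    using assms(1) unfolding is_path_def by auto
  show "v # P \<noteq> []" by simp
  show "distinct (v # P)" using d assms(2) by simp
  fix i assume i: "Suc i < length (v # P)"
  show "E ((v # P) ! i) ((v # P) ! Suc i)"
  proof (cases i)
    case 0 then show ?thesis using assms(3) ne by (simp add: hd_conv_nth)
  next
    case (Suc j) then show ?thesis using ed[of j] i by simp
  qed
qed

lemma path_shortcut:
  assumes P: "is_path E P" and ij: "Suc i < j" "j < length P" and e: "E (P!i) (P!j)"
  shows "is_path E (take (Suc i) P @ drop j P)" "hd (take (Suc i) P @ drop j P) = hd P"
    "last (take (Suc i) P @ drop j P) = last P" "length (take (Suc i) P @ drop j P) < length P"
    "set (take (Suc i) P @ drop j P) \<subseteq> set P"
proof -
  let ?Q = "take (Suc i) P @ drop j P"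
  have lQ: "length ?Q = Suc i + (length P - j)" using ij by simp
  have d: "distinct P" using P unfolding is_path_def by simp
  have "distinct ?Q"
    using d ij by (auto simp: set_take_disj_set_drop_if_distinct)
  moreover have "E (?Q ! k) (?Q ! Suc k)" if k: "Suc k < length ?Q" for k
  proof -
    consider "k < i" | "k = i" | "i < k" by linarith
    then show ?thesis
    proof cases
      case 1
      then have "?Q ! k = P ! k" "?Q ! Suc k = P ! Suc k" using ij by (auto simp: nth_append)
      then show ?thesis using P 1 ij unfolding is_path_def by auto
    next
      case 2
      then have "?Q ! k = P ! i" "?Q ! Suc k = P ! j" using ij by (auto simp: nth_append)
      then show ?thesis using e by simp
    next
      case 3
      then have "?Q ! k = P ! (j + (k - Suc i))" "?Q ! Suc k = P ! Suc (j + (k - Suc i))"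
        using ij k by (auto simp: nth_append Suc_diff_Suc)
      then show ?thesis using P 3 ij k unfolding is_path_def by auto
    qed
  qed
  ultimately show "is_path E ?Q" unfolding is_path_def using ij by auto
  show "hd ?Q = hd P" using ij by (cases P) auto
  show "last ?Q = last P" using ij by simp
  show "length ?Q < length P" using ij by simp
  show "set ?Q \<subseteq> set P" using set_take_subset set_drop_subset by fastforce
qed

definition chordless :: "('a \<Rightarrow> 'a \<Rightarrow> bool) \<Rightarrow> 'a list \<Rightarrow> bool" where
  "chordless E P \<longleftrightarrow> (\<forall>i j. i < length P \<longrightarrow> j < length P \<longrightarrow> E (P!i) (P!j) \<longrightarrow> j = Suc i \<or> i = Suc j)"

lemma min_chordless:
  assumes sym: "\<And>x y. E x y \<Longrightarrow> E y x" and irr: "\<And>x. \<not> E x x" and P: "is_path E P"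
    and min: "\<And>Q. is_path E Q \<Longrightarrow> hd Q = hd P \<Longrightarrow> last Q = last P \<Longrightarrow> set Q \<subseteq> set P \<Longrightarrow> length P \<le> length Q"
  shows "chordless E P"
  unfolding chordless_def
proof (intro allI impI)
  have key: "False" if "Suc i < j" "j < length P" "E (P!i) (P!j)" for i j
    using path_shortcut[OF P that] min[of "take (Suc i) P @ drop j P"] by auto
  fix i j assume "i < length P" "j < length P" "E (P!i) (P!j)"
  moreover have "i \<noteq> j" using irr \<open>E (P!i) (P!j)\<close> by auto
  ultimately show "j = Suc i \<or> i = Suc j"
    using key[of i j] key[of j i] sym by (metis Suc_lessI linorder_neqE_nat)
qed

lemma rtranclp_path:
  assumes "R\<^sup>*\<^sup>* u v" "\<And>x y. R x y \<Longrightarrow> E x y"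
  shows "\<exists>P. is_path E P \<and> hd P = u \<and> last P = v \<and> (\<forall>z\<in>set P. R\<^sup>*\<^sup>* u z)"
  using assms(1)
proof (induction rule: converse_rtranclp_induct)
  case base
  then show ?case by (intro exI[of _ "[v]"]) (auto simp: path_single)
next
  case (step u u')
  then obtain P where P: "is_path E P" "hd P = u'" "last P = v" "\<forall>z\<in>set P. R\<^sup>*\<^sup>* u' z" by blast
  have reach: "\<forall>z\<in>set P. R\<^sup>*\<^sup>* u z" using P(4) step(1) by (meson converse_rtranclp_into_rtranclp)
  show ?case
  proof (cases "u \<in> set P")
    case True
    then obtain k where k: "k < length P" "P ! k = u" by (meson in_set_conv_nth)
    show ?thesis using path_drop[OF P(1) k(1)] k P reach by (intro exI[of _ "drop k P"]) auto
  next
    case False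
    have "P \<noteq> []" using P unfolding is_path_def by auto
    then show ?thesis using path_cons[OF P(1) False] P reach step(1) assms(2)
      by (intro exI[of _ "u # P"]) auto
  qed
qed

lemma chordal_restrict:
  assumes "chordal V E" "W \<subseteq> V"
  shows "chordal W (\<lambda>x y. E x y \<and> x \<in> W \<and> y \<in> W)"
proof -
  have "induced_cycle V E xs" if "induced_cycle W (\<lambda>x y. E x y \<and> x \<in> W \<and> y \<in> W) xs" for xs
  proof -
    have "is_path E xs" using that path_mono[of "\<lambda>x y. E x y \<and> x \<in> W \<and> y \<in> W" E] 
      unfolding induced_cycle_def is_cycle_def by blast
    then show ?thesis using that assms(2) unfolding induced_cycle_def is_cycle_def
      by (auto) (meson nth_mem subsetD)
  qed
  then show ?thesis using assms unfolding chordal_def by blast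
qed

lemma cycle_from_path:
  assumes g: "graph V E" and a: "a \<in> V" and P: "is_path E P" "length P \<ge> 3" "chordless E P"
    and ah: "E a (hd P)" and al: "E a (last P)"
    and ai: "\<And>i. 0 < i \<Longrightarrow> i < length P - 1 \<Longrightarrow> \<not> E a (P!i)"
    and an: "a \<notin> set P" and PV: "set P \<subseteq> V"
  shows "induced_cycle V E (a # P) \<and> length (a # P) \<ge> 4"
proof -
  have sym: "\<And>x y. E x y \<Longrightarrow> E y x" and irr: "\<And>x. \<not> E x x" using g unfolding graph_def by auto
  let ?L = "a # P"
  have ne: "P \<noteq> []" using P by auto
  have hd0: "hd P = P ! 0" using ne by (simp add: hd_conv_nth)
  have last0: "last P = P ! (length P - 1)" using ne by (simp add: last_conv_nth)
  have pathL: "is_path E ?L" using path_cons[OF P(1) an] ah by simp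
  have cyc: "is_cycle E ?L" unfolding is_cycle_def using pathL P(2) al sym by auto
  have ind: "j = Suc i mod length ?L \<or> i = Suc j mod length ?L"
    if ij: "i < length ?L" "j < length ?L" "E (?L ! i) (?L ! j)" for i j
  proof -
    have aj: "j = 1 \<or> j = length P" if "0 < j" "j < length ?L" "E a (?L ! j)" for j
    proof -
      have "?L ! j = P ! (j - 1)" using that by simp
      then have "\<not> (0 < j - 1 \<and> j - 1 < length P - 1)" using ai[of "j - 1"] that by auto
      moreover have "j < Suc (length P)" using that by simp
      ultimately show ?thesis using that(1) P(2) by linarith
    qed
    show ?thesis
    proof (cases "i = 0")
      case True
      then have "j \<noteq> 0" using ij irr by (cases j) auto
      then have "j = 1 \<or> j = length P" using aj[of j] ij True by auto
      then show ?thesis using True P(2) by auto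
    next
      case False
      note i0 = False
      show ?thesis
      proof (cases "j = 0")
        case True
        then have "i = 1 \<or> i = length P" using aj[of i] ij i0 sym by auto
        then show ?thesis using True P(2) by auto
      next
        case False
        have "E (P ! (i-1)) (P ! (j-1))" using ij i0 False by simp
        moreover have "i - 1 < length P" "j - 1 < length P" using ij i0 False by auto
        ultimately have "j - 1 = Suc (i - 1) \<or> i - 1 = Suc (j - 1)"
          using P(3) unfolding chordless_def by blast
        then show ?thesis using ij i0 False by auto
      qed
    qed
  qed
  show ?thesis unfolding induced_cycle_def using cyc ind a PV P(2) by auto
qed

definition clique :: "('a \<Rightarrow> 'a \<Rightarrow> bool) \<Rightarrow> 'a set \<Rightarrow> bool" where
  "clique E K \<longleftrightarrow> (\<forall>x\<in>K. \<forall>y\<in>K. x \<noteq> y \<longrightarrow> E x y)"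

definition simplicial :: "('a \<Rightarrow> 'a \<Rightarrow> bool) \<Rightarrow> 'a \<Rightarrow> bool" where
  "simplicial E w \<longleftrightarrow> (\<forall>x y. E w x \<longrightarrow> E w y \<longrightarrow> x \<noteq> y \<longrightarrow> E x y)"

lemma rtranclp_sym:
  assumes "R\<^sup>*\<^sup>* u v" "\<And>x y. R x y \<Longrightarrow> R y x"
  shows "R\<^sup>*\<^sup>* v u"
  using assms(1)
proof (induction rule: rtranclp_induct)
  case base then show ?case by simp
next
  case (step y z) then show ?case using assms(2) by (meson converse_rtranclp_into_rtranclp)
qed

lemma sep_clique:
  assumes g: "graph V E" and ch: "chordal V E" and a: "a \<in> V"
    and W: "W = {z\<in>V. z \<noteq> a \<and> \<not> E a z}"
    and R: "R = (\<lambda>x y. E x y \<and> x \<in> W \<and> y \<in> W)"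
    and c0: "c0 \<in> W" and C: "C = {z. R\<^sup>*\<^sup>* c0 z}"
    and S: "S = {x\<in>V. x \<notin> C \<and> (\<exists>c\<in>C. E x c)}"
  shows "S \<subseteq> {z. E a z}" "clique E S" "C \<subseteq> W"
proof -
  have sym: "\<And>x y. E x y \<Longrightarrow> E y x" and irr: "\<And>x. \<not> E x x"
    and inV: "\<And>x y. E x y \<Longrightarrow> x \<in> V \<and> y \<in> V" using g unfolding graph_def by auto
  show CW: "C \<subseteq> W"
  proof
    fix z assume "z \<in> C"
    then have "R\<^sup>*\<^sup>* c0 z" using C by simp
    then show "z \<in> W" using c0 by (induction rule: rtranclp_induct) (auto simp: R)
  qed
  show SN: "S \<subseteq> {z. E a z}"
  proof
    fix x assume x: "x \<in> S"
    then obtain c where c: "c \<in> C" "E x c" using S by auto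
    have cW: "c \<in> W" using c CW by auto
    have "x \<notin> W"
    proof
      assume "x \<in> W"
      then have "R c x" using cW c sym R by auto
      then have "x \<in> C" using c C by (simp add: rtranclp.rtrancl_into_rtrancl)
      then show False using x S by auto
    qed
    moreover have "x \<noteq> a" using cW c W by auto
    ultimately show "x \<in> {z. E a z}" using x S W by auto
  qed
  show "clique E S"
    unfolding clique_def
  proof (intro ballI impI, rule ccontr)
    fix x y assume x: "x \<in> S" and y: "y \<in> S" and xy: "x \<noteq> y" and nxy: "\<not> E x y"
    obtain c1 where c1: "c1 \<in> C" "E x c1" using x S by auto
    obtain c2 where c2: "c2 \<in> C" "E y c2" using y S by auto
    have Rsym: "\<And>u v. R u v \<Longrightarrow> R v u" using sym R by auto
    have "R\<^sup>*\<^sup>* c1 c0" using c1 C rtranclp_sym[OF _ Rsym] by auto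
    then have r12: "R\<^sup>*\<^sup>* c1 c2" using c2 C by auto
    obtain P0 where P0: "is_path E P0" "hd P0 = c1" "last P0 = c2" "\<forall>z\<in>set P0. R\<^sup>*\<^sup>* c1 z"
      using rtranclp_path[OF r12, of E] R by auto
    have P0C: "set P0 \<subseteq> C" using P0(4) c1 C by auto
    have xC: "x \<notin> C" and yC: "y \<notin> C" using x y S by auto
    have ne0: "P0 \<noteq> []" using P0 unfolding is_path_def by auto
    have p1: "is_path E (P0 @ [y])" using path_snoc[OF P0(1)] P0C yC P0(3) c2 sym by blast
    have p2: "is_path E (x # P0 @ [y])" using path_cons[OF p1] P0C xC xy c1 P0(2) ne0 by auto
    define Pr where "Pr Q \<longleftrightarrow> is_path E Q \<and> hd Q = x \<and> last Q = y \<and> set Q \<subseteq> insert x (insert y C)" for Q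
    have "Pr (x # P0 @ [y])" using p2 P0C unfolding Pr_def by auto
    then obtain Pm where Pm: "Pr Pm" and mn: "\<And>Q. Pr Q \<Longrightarrow> length Pm \<le> length Q"
      using ex_has_least_nat[of Pr _ length] by metis
    have pm: "is_path E Pm" "hd Pm = x" "last Pm = y" "set Pm \<subseteq> insert x (insert y C)"
      using Pm unfolding Pr_def by auto
    have chl: "chordless E Pm"
      using min_chordless[OF sym irr pm(1)] mn pm unfolding Pr_def by (metis order_trans)
    have nePm: "Pm \<noteq> []" using pm unfolding is_path_def by auto
    have dPm: "distinct Pm" using pm unfolding is_path_def by auto
    have h0: "Pm ! 0 = x" using pm nePm by (simp add: hd_conv_nth)
    have l0: "Pm ! (length Pm - 1) = y" using pm nePm by (simp add: last_conv_nth)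
    have len: "length Pm \<ge> 3"
    proof (rule ccontr)
      assume "\<not> 3 \<le> length Pm"
      moreover have "length Pm \<noteq> 1" using h0 l0 xy by auto
      moreover have "length Pm \<noteq> 0" using nePm by auto
      ultimately have "length Pm = 2" by linarith
      then have "E (Pm!0) (Pm!1)" using pm unfolding is_path_def by auto
      then show False using h0 l0 \<open>length Pm = 2\<close> nxy by auto
    qed
    have ai: "\<not> E a (Pm ! i)" if "0 < i" "i < length Pm - 1" for i
    proof -
      have il: "i < length Pm" using that by linarith
      have "Pm ! i \<noteq> x" using h0 il nePm that nth_eq_iff_index_eq[OF dPm, of i 0] by auto
      moreover have "Pm ! i \<noteq> y" using l0 dPm that nth_eq_iff_index_eq[OF dPm, of i "length Pm - 1"] by auto
      moreover have "Pm ! i \<in> set Pm" using that by auto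
      ultimately have "Pm ! i \<in> C" using pm by auto
      then show ?thesis using CW W by auto
    qed
    have Ea: "E a x" "E a y" using SN x y by auto
    have aC: "a \<notin> C" using CW W by auto
    have an: "a \<notin> set Pm" using pm aC Ea irr by auto
    have PV: "set Pm \<subseteq> V" using pm CW W Ea inV by auto
    have "induced_cycle V E (a # Pm) \<and> length (a # Pm) \<ge> 4"
      using cycle_from_path[OF g a pm(1) len chl] Ea pm ai an PV by auto
    then show False using ch unfolding chordal_def by blast
  qed
qed

lemma graph_restrict:
  assumes "graph V E" "H \<subseteq> V"
  shows "graph H (\<lambda>x y. E x y \<and> x \<in> H \<and> y \<in> H)"
  using assms unfolding graph_def by (auto intro: finite_subset)

lemma dirac:
  assumes "graph V E" "chordal V E" "a \<in> V" "\<exists>z\<in>V. z \<noteq> a \<and> \<not> E a z"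
  shows "\<exists>w\<in>V. w \<noteq> a \<and> \<not> E a w \<and> simplicial E w"
  using assms
proof (induction "card V" arbitrary: V E a rule: less_induct)
  case less
  note g = less.prems(1) and ch = less.prems(2) and a = less.prems(3)
  have sym: "\<And>x y. E x y \<Longrightarrow> E y x" and irr: "\<And>x. \<not> E x x" and fin: "finite V"
    and inV: "\<And>x y. E x y \<Longrightarrow> x \<in> V \<and> y \<in> V" using g unfolding graph_def by auto
  define W where "W = {z\<in>V. z \<noteq> a \<and> \<not> E a z}"
  define R where "R = (\<lambda>x y. E x y \<and> x \<in> W \<and> y \<in> W)"
  obtain c0 where c0: "c0 \<in> W" using less.prems(4) W_def by auto
  define C where "C = {z. R\<^sup>*\<^sup>* c0 z}"
  define S where "S = {x\<in>V. x \<notin> C \<and> (\<exists>c\<in>C. E x c)}"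
  note sc = sep_clique[OF g ch a W_def R_def c0 C_def S_def]
  define H where "H = C \<union> S"
  define EH where "EH = (\<lambda>x y. E x y \<and> x \<in> H \<and> y \<in> H)"
  have HV: "H \<subseteq> V" using sc W_def S_def H_def by auto
  have aH: "a \<notin> H" using sc W_def irr H_def by auto
  have cardH: "card H < card V" using HV aH a fin by (metis psubsetI psubset_card_mono)
  have gH: "graph H EH" using graph_restrict[OF g HV] EH_def by simp
  have chH: "chordal H EH" using chordal_restrict[OF ch HV] EH_def by simp
  have c0C: "c0 \<in> C" using C_def by simp
  have nbr: "z \<in> H" if "w \<in> C" "E w z" for w z
    using that sym inV S_def H_def by auto
  have simpl: "simplicial E w" if "w \<in> C" "simplicial EH w" for w
    unfolding simplicial_def
  proof (intro allI impI)
    fix x y assume "E w x" "E w y" "x \<noteq> y"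
    then show "E x y" using that nbr[of w x] nbr[of w y] unfolding simplicial_def EH_def H_def by auto
  qed
  have concl: "\<exists>w\<in>V. w \<noteq> a \<and> \<not> E a w \<and> simplicial E w" if "w \<in> C" "simplicial EH w" for w
    using simpl[OF that] that sc W_def by auto
  show ?case
  proof (cases "\<forall>z\<in>H. \<forall>z'\<in>H. z \<noteq> z' \<longrightarrow> E z z'")
    case True
    have "simplicial EH c0" unfolding simplicial_def EH_def using True by auto
    then show ?thesis using concl c0C by blast
  next
    case False
    then obtain z1 z2 where z: "z1 \<in> H" "z2 \<in> H" "z1 \<noteq> z2" "\<not> E z1 z2" by blast
    show ?thesis
    proof (cases "\<exists>z\<in>S. \<exists>z'\<in>H. z' \<noteq> z \<and> \<not> E z z'")
      case True
      then obtain z z' where zz: "z \<in> S" "z' \<in> H" "z' \<noteq> z" "\<not> E z z'" by blast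
      have "\<exists>w\<in>H. w \<noteq> z \<and> \<not> EH z w \<and> simplicial EH w"
        using less.hyps[OF cardH gH chH] zz H_def EH_def by auto
      then obtain w where w: "w \<in> H" "w \<noteq> z" "\<not> EH z w" "simplicial EH w" by blast
      have "w \<notin> S"
      proof
        assume "w \<in> S"
        then have "E z w" using sc(2) zz w unfolding clique_def by auto
        then show False using w zz \<open>w \<in> S\<close> EH_def H_def by auto
      qed
      then show ?thesis using concl w H_def by auto
    next
      case False
      have "\<exists>z\<in>H. z \<noteq> z1 \<and> \<not> EH z1 z" using z EH_def by metis
      then have "\<exists>w\<in>H. w \<noteq> z1 \<and> \<not> EH z1 w \<and> simplicial EH w"
        using less.hyps[OF cardH gH chH z(1)] by blast
      then obtain w where w: "w \<in> H" "w \<noteq> z1" "\<not> EH z1 w" "simplicial EH w" by blast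
      have "w \<notin> S"
      proof
        assume "w \<in> S"
        then have "E w z1" using False z w by auto
        then show False using w z sym EH_def by auto
      qed
      then show ?thesis using concl w H_def by auto
    qed
  qed
qed

lemma simplicial_exists:
  assumes "graph V E" "chordal V E" "V \<noteq> {}"
  shows "\<exists>w\<in>V. simplicial E w"
proof (cases "\<forall>z\<in>V. \<forall>z'\<in>V. z \<noteq> z' \<longrightarrow> E z z'")
  case True
  obtain w where "w \<in> V" using assms by auto
  moreover have "simplicial E w" unfolding simplicial_def using True assms(1) unfolding graph_def by blast
  ultimately show ?thesis by blast
next
  case False
  then obtain a z where "a \<in> V" "z \<in> V" "a \<noteq> z" "\<not> E a z" by blast
  then have "\<exists>w\<in>V. w \<noteq> a \<and> \<not> E a w \<and> simplicial E w" using dirac[OF assms(1,2), of a] by metis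
  then show ?thesis by blast
qed

lemma connected_mono:
  assumes "\<And>x y. T x y \<Longrightarrow> T' x y" "connected_on S T"
  shows "connected_on S T'"
  using assms path_mono[of T T'] unfolding connected_on_def by metis

lemma connected_single: "connected_on {x} T"
  unfolding connected_on_def using path_single[of T x] by (intro ballI exI[of _ "[x]"]) auto

lemma connected_leaf:
  assumes c: "connected_on S T" and s: "s \<in> S" and n0: "n0 \<notin> S"
    and e: "T' n0 s" "T' s n0" and m: "\<And>x y. T x y \<Longrightarrow> T' x y"
  shows "connected_on (insert n0 S) T'"
proof -
  have c': "connected_on S T'" using connected_mono[OF m c] .
  show ?thesis unfolding connected_on_def
  proof (intro ballI)
    fix u v assume u: "u \<in> insert n0 S" and v: "v \<in> insert n0 S"
    show "\<exists>xs. is_path T' xs \<and> hd xs = u \<and> last xs = v \<and> set xs \<subseteq> insert n0 S"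
    proof (cases "u = n0")
      case un: True
      show ?thesis
      proof (cases "v = n0")
        case True then show ?thesis using un path_single[of T' n0] by (intro exI[of _ "[n0]"]) auto
      next
        case False
        then have "v \<in> S" using v by auto
        then obtain P where P: "is_path T' P" "hd P = s" "last P = v" "set P \<subseteq> S"
          using c' s unfolding connected_on_def by blast
        have ne: "P \<noteq> []" using P unfolding is_path_def by auto
        have "is_path T' (n0 # P)" using path_cons[OF P(1)] P n0 e by auto
        then show ?thesis using un P ne by (intro exI[of _ "n0 # P"]) auto
      qed
    next
      case False
      then have uS: "u \<in> S" using u by auto
      show ?thesis
      proof (cases "v = n0")
        case True
        obtain P where P: "is_path T' P" "hd P = u" "last P = s" "set P \<subseteq> S"
          using c' s uS unfolding connected_on_def by blast
        have ne: "P \<noteq> []" using P unfolding is_path_def by auto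
        have "is_path T' (P @ [n0])" using path_snoc[OF P(1)] P n0 e by auto
        then show ?thesis using True P ne by (intro exI[of _ "P @ [n0]"]) auto
      next
        case False
        then have "v \<in> S" using v by auto
        then show ?thesis using c' uS unfolding connected_on_def by blast
      qed
    qed
  qed
qed

lemma acyclic_leaf:
  assumes g: "graph N T" and n0: "n0 \<notin> N" and s: "s \<in> N"
    and T': "T' = (\<lambda>x y. T x y \<or> (x = n0 \<and> y = s) \<or> (x = s \<and> y = n0))"
    and ac: "\<not> (\<exists>xs. is_cycle T xs)"
  shows "\<not> (\<exists>xs. is_cycle T' xs)"
proof
  assume "\<exists>xs. is_cycle T' xs"
  then obtain xs where cy: "is_cycle T' xs" by blast
  have inN: "\<And>x y. T x y \<Longrightarrow> x \<in> N \<and> y \<in> N" using g unfolding graph_def by auto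
  have sn: "s \<noteq> n0" using s n0 by auto
  have nb1: "y = s" if "T' n0 y" for y using that T' inN n0 sn by auto
  have nb2: "y = s" if "T' y n0" for y using that T' inN n0 sn by auto
  have len: "length xs \<ge> 3" and d: "distinct xs" and ne: "xs \<noteq> []"
    and ed: "\<And>i. Suc i < length xs \<Longrightarrow> T' (xs!i) (xs!Suc i)" and lh: "T' (last xs) (hd xs)"
    using cy unfolding is_cycle_def is_path_def by auto
  have h0: "hd xs = xs ! 0" using ne by (simp add: hd_conv_nth)
  have l0: "last xs = xs ! (length xs - 1)" using ne by (simp add: last_conv_nth)
  show False
  proof (cases "n0 \<in> set xs")
    case False
    have "is_path T xs" unfolding is_path_def
    proof (intro conjI allI impI)
      show "xs \<noteq> []" "distinct xs" using ne d by auto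
      fix i assume i: "Suc i < length xs"
      have "xs ! i \<noteq> n0" "xs ! Suc i \<noteq> n0" using False i by (auto dest: nth_mem)
      then show "T (xs!i) (xs!Suc i)" using ed[OF i] T' by auto
    qed
    moreover have "last xs \<noteq> n0" "hd xs \<noteq> n0" using False ne by auto
    then have "T (last xs) (hd xs)" using lh T' by auto
    ultimately have "is_cycle T xs" using len unfolding is_cycle_def by auto
    then show False using ac by blast
  next
    case True
    then obtain i where i: "i < length xs" "xs ! i = n0" by (meson in_set_conv_nth)
    have neq: "xs ! p \<noteq> xs ! q" if "p < length xs" "q < length xs" "p \<noteq> q" for p q
      using nth_eq_iff_index_eq[OF d that(1,2)] that(3) by auto
    consider "i = 0" | "i = length xs - 1" "i > 0" | "0 < i" "i < length xs - 1" using i by linarith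
    then show False
    proof cases
      case 1
      have "xs ! 1 = s" using nb1 ed[of 0] i 1 len by auto
      moreover have "xs ! (length xs - 1) = s" using nb2 lh h0 l0 i 1 by auto
      moreover have "length xs - 1 < length xs" "1 < length xs" "(1::nat) \<noteq> length xs - 1" using len by auto
      ultimately show False using neq[of 1 "length xs - 1"] by auto
    next
      case 2
      have si: "Suc (i - 1) = i" using 2 by simp
      then have "T' (xs ! (i - 1)) (xs ! i)" using ed[of "i - 1"] i by auto
      then have "xs ! (i - 1) = s" using nb2 i by auto
      moreover have "xs ! 0 = s" using nb1 lh h0 l0 i 2 by auto
      moreover have "i - 1 < length xs" "0 < length xs" "i - 1 \<noteq> 0" using len 2 by auto
      ultimately show False using neq[of "i - 1" 0] by auto
    next
      case 3
      have "xs ! (i - 1) = s" using nb2 ed[of "i - 1"] i 3 by auto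
      moreover have "xs ! Suc i = s" using nb1 ed[of i] i 3 by auto
      moreover have "i - 1 < length xs" "Suc i < length xs" "i - 1 \<noteq> Suc i" using 3 by auto
      ultimately show False using neq[of "i - 1" "Suc i"] by auto
    qed
  qed
qed

lemma clique_decomp:
  assumes "graph V E" "chordal V E"
  shows "\<exists>N T B. tree_decomposition V E N T B \<and> (\<forall>t\<in>N. clique E (B t)) \<and>
           (\<forall>K\<subseteq>V. clique E K \<longrightarrow> (\<exists>t\<in>N. K \<subseteq> B t))"
  using assms
proof (induction "card V" arbitrary: V E rule: less_induct)
  case less
  note g = less.prems(1) and ch = less.prems(2)
  have sym: "\<And>x y. E x y \<Longrightarrow> E y x" and irr: "\<And>x. \<not> E x x" and fin: "finite V"
    and inV: "\<And>x y. E x y \<Longrightarrow> x \<in> V \<and> y \<in> V" using g unfolding graph_def by auto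
  show ?case
  proof (cases "V = {}")
    case True
    define T :: "nat \<Rightarrow> nat \<Rightarrow> bool" where "T = (\<lambda>_ _. False)"
    define B :: "nat \<Rightarrow> 'a set" where "B = (\<lambda>_. {})"
    have "is_tree {0} T" unfolding is_tree_def graph_def is_cycle_def T_def
      using connected_single[of 0 "\<lambda>_ _. False"] by auto
    moreover have "\<not> E u v" for u v using inV True by auto
    ultimately have "tree_decomposition V E {0} T B" unfolding tree_decomposition_def B_def using True by auto
    moreover have "\<forall>t\<in>{0}. clique E (B t)" unfolding clique_def B_def by auto
    moreover have "\<forall>K\<subseteq>V. clique E K \<longrightarrow> (\<exists>t\<in>{0::nat}. K \<subseteq> B t)" using True by auto
    ultimately show ?thesis by blast
  next
    case False
    obtain v where v: "v \<in> V" "simplicial E v" using simplicial_exists[OF g ch False] by blast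
    define V' where "V' = V - {v}"
    define E' where "E' = (\<lambda>x y. E x y \<and> x \<in> V' \<and> y \<in> V')"
    have V'V: "V' \<subseteq> V" using V'_def by auto
    have cV': "card V' < card V" using card_Diff1_less[OF fin v(1)] V'_def by simp
    have gV': "graph V' E'" using graph_restrict[OF g V'V] E'_def by simp
    have chV': "chordal V' E'" using chordal_restrict[OF ch V'V] E'_def by simp
    obtain N T B where td: "tree_decomposition V' E' N T B" and cl: "\<forall>t\<in>N. clique E' (B t)"
      and cov: "\<forall>K\<subseteq>V'. clique E' K \<longrightarrow> (\<exists>t\<in>N. K \<subseteq> B t)"
      using less.hyps[OF cV' gV' chV'] by blast
    have tr: "is_tree N T" and BV: "\<forall>t\<in>N. B t \<subseteq> V'" and cover: "\<forall>u\<in>V'. \<exists>t\<in>N. u \<in> B t"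
      and eds: "\<forall>u w. E' u w \<longrightarrow> (\<exists>t\<in>N. u \<in> B t \<and> w \<in> B t)"
      and sub: "\<forall>u\<in>V'. connected_on {t\<in>N. u \<in> B t} T"
      using td unfolding tree_decomposition_def by auto
    have gN: "graph N T" and conN: "connected_on N T" and acN: "\<not> (\<exists>xs. is_cycle T xs)"
      using tr unfolding is_tree_def by auto
    have finN: "finite N" using gN unfolding graph_def by auto
    define Nb where "Nb = {y. E v y}"
    have NbV': "Nb \<subseteq> V'" using inV irr Nb_def V'_def by auto
    have "clique E' Nb" using v(2) NbV' unfolding clique_def simplicial_def Nb_def E'_def by auto
    then obtain s where s: "s \<in> N" "Nb \<subseteq> B s" using cov NbV' by blast
    obtain n0 :: nat where n0: "n0 \<notin> N" using finN ex_new_if_finite infinite_UNIV_nat by blast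
    define N2 where "N2 = insert n0 N"
    define T2 where "T2 = (\<lambda>x y. T x y \<or> (x = n0 \<and> y = s) \<or> (x = s \<and> y = n0))"
    define B2 where "B2 = B(n0 := insert v Nb)"
    have sn: "s \<noteq> n0" using s n0 by auto
    have mT: "\<And>x y. T x y \<Longrightarrow> T2 x y" using T2_def by auto
    have e1: "T2 n0 s" "T2 s n0" using T2_def by auto
    have gN2: "graph N2 T2" using gN s n0 sn unfolding graph_def N2_def T2_def by auto
    have conN2: "connected_on N2 T2" using connected_leaf[OF conN s(1) n0 e1 mT] N2_def by simp
    have acN2: "\<not> (\<exists>xs. is_cycle T2 xs)" using acyclic_leaf[OF gN n0 s(1) T2_def acN] .
    have tree2: "is_tree N2 T2" unfolding is_tree_def using gN2 conN2 acN2 N2_def by auto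
    have B2old: "B2 t = B t" if "t \<in> N" for t using that n0 B2_def by auto
    have vold: "v \<notin> B t" if "t \<in> N" for t using that BV V'_def by auto
    have "tree_decomposition V E N2 T2 B2"
      unfolding tree_decomposition_def
    proof (intro conjI)
      show "is_tree N2 T2" by (rule tree2)
      show "\<forall>t\<in>N2. B2 t \<subseteq> V" using BV B2old N2_def B2_def v NbV' V'_def by auto
      show "\<forall>u\<in>V. \<exists>t\<in>N2. u \<in> B2 t"
      proof
        fix u assume "u \<in> V"
        show "\<exists>t\<in>N2. u \<in> B2 t"
        proof (cases "u = v")
          case True then show ?thesis using N2_def B2_def by auto
        next
          case False
          then obtain t where "t \<in> N" "u \<in> B t" using cover \<open>u \<in> V\<close> V'_def by auto
          then show ?thesis using B2old N2_def by auto
        qed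
      qed
      show "\<forall>u w. E u w \<longrightarrow> (\<exists>t\<in>N2. u \<in> B2 t \<and> w \<in> B2 t)"
      proof (intro allI impI)
        fix u w assume uw: "E u w"
        show "\<exists>t\<in>N2. u \<in> B2 t \<and> w \<in> B2 t"
        proof (cases "u = v \<or> w = v")
          case True
          then show ?thesis using uw sym N2_def B2_def Nb_def by auto
        next
          case False
          then have "E' u w" using uw inV E'_def V'_def by auto
          then obtain t where "t \<in> N" "u \<in> B t" "w \<in> B t" using eds by blast
          then show ?thesis using B2old N2_def by auto
        qed
      qed
      show "\<forall>u\<in>V. connected_on {t\<in>N2. u \<in> B2 t} T2"
      proof
        fix u assume uV: "u \<in> V"
        consider "u = v" | "u \<noteq> v" "u \<in> Nb" | "u \<noteq> v" "u \<notin> Nb" by blast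
        then show "connected_on {t\<in>N2. u \<in> B2 t} T2"
        proof cases
          case 1
          then have "{t\<in>N2. u \<in> B2 t} = {n0}" using vold B2old N2_def B2_def by auto
          then show ?thesis using connected_single by simp
        next
          case 2
          then have eq: "{t\<in>N2. u \<in> B2 t} = insert n0 {t\<in>N. u \<in> B t}" using B2old N2_def B2_def by auto
          have "u \<in> V'" using 2 uV V'_def by auto
          then have f1: "connected_on {t\<in>N. u \<in> B t} T" using sub by blast
          have f2: "s \<in> {t\<in>N. u \<in> B t}" using s 2 by auto
          have f3: "n0 \<notin> {t\<in>N. u \<in> B t}" using n0 by auto
          show ?thesis using connected_leaf[OF f1 f2 f3 e1 mT] eq by simp
        next
          case 3
          then have eq: "{t\<in>N2. u \<in> B2 t} = {t\<in>N. u \<in> B t}" using B2old N2_def B2_def n0 by auto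
          have "u \<in> V'" using 3 uV V'_def by auto
          then have "connected_on {t\<in>N. u \<in> B t} T" using sub by blast
          then show ?thesis using connected_mono[OF mT] eq by auto
        qed
      qed
    qed
    moreover have "\<forall>t\<in>N2. clique E (B2 t)"
    proof
      fix t assume "t \<in> N2"
      show "clique E (B2 t)"
      proof (cases "t = n0")
        case True
        have "B2 t = insert v Nb" using True B2_def by simp
        moreover have "clique E (insert v Nb)"
          unfolding clique_def
        proof (intro ballI impI)
          fix x y assume x: "x \<in> insert v Nb" and y: "y \<in> insert v Nb" and xy: "x \<noteq> y"
          show "E x y"
          proof (cases "x = v")
            case True then show ?thesis using y xy Nb_def by auto
          next
            case False
            note xv = False
            show ?thesis
            proof (cases "y = v")
              case True then show ?thesis using x xv sym Nb_def by auto
            next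
              case False
              then have "E v x" "E v y" using x y xv Nb_def by auto
              then show ?thesis using v(2) xy unfolding simplicial_def by blast
            qed
          qed
        qed
        ultimately show ?thesis by simp
      next
        case False
        then show ?thesis using cl \<open>t \<in> N2\<close> B2old N2_def unfolding clique_def E'_def by auto
      qed
    qed
    moreover have "\<forall>K\<subseteq>V. clique E K \<longrightarrow> (\<exists>t\<in>N2. K \<subseteq> B2 t)"
    proof (intro allI impI)
      fix K assume K: "K \<subseteq> V" "clique E K"
      show "\<exists>t\<in>N2. K \<subseteq> B2 t"
      proof (cases "v \<in> K")
        case True
        then have "K \<subseteq> insert v Nb" using K unfolding clique_def Nb_def by auto
        then show ?thesis using N2_def B2_def by auto
      next
        case False
        then have "K \<subseteq> V'" "clique E' K" using K unfolding V'_def E'_def clique_def by auto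
        then obtain t where "t \<in> N" "K \<subseteq> B t" using cov by blast
        then show ?thesis using B2old N2_def by auto
      qed
    qed
    ultimately show ?thesis by blast
  qed
qed

lemma gdist_exists:
  assumes "connected_on V E" "x \<in> V" "u \<in> V"
  shows "\<exists>xs. is_path E xs \<and> hd xs = x \<and> last xs = u \<and> length xs = Suc (gdist E x u)"
proof -
  obtain P where P: "is_path E P" "hd P = x" "last P = u" using assms unfolding connected_on_def by blast
  then have ne: "P \<noteq> []" unfolding is_path_def by auto
  then have "\<exists>n xs. is_path E xs \<and> hd xs = x \<and> last xs = u \<and> length xs = Suc n"
    using P by (intro exI[of _ "length P - 1"] exI[of _ P]) auto
  then show ?thesis unfolding gdist_def by (rule LeastI_ex)
qed

lemma gdist_le_path:
  assumes "is_path E xs" "hd xs = x" "last xs = u" "length xs = Suc n"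
  shows "gdist E x u \<le> n"
  unfolding gdist_def using assms by (intro Least_le) blast

lemma gdist_step:
  assumes c: "connected_on V E" and g: "graph V E" and x: "x \<in> V" and e: "E u v"
  shows "gdist E x v \<le> Suc (gdist E x u)"
proof -
  have uV: "u \<in> V" using g e unfolding graph_def by auto
  obtain P where P: "is_path E P" "hd P = x" "last P = u" "length P = Suc (gdist E x u)"
    using gdist_exists[OF c x uV] by blast
  have ne: "P \<noteq> []" using P unfolding is_path_def by auto
  show ?thesis
  proof (cases "v \<in> set P")
    case True
    then obtain k where k: "k < length P" "P ! k = v" by (meson in_set_conv_nth)
    have "gdist E x v \<le> k" using path_take[OF P(1) k(1)] P(2) k by (intro gdist_le_path) auto
    then show ?thesis using k P(4) by linarith
  next
    case False
    have "is_path E (P @ [v])" using path_snoc[OF P(1) False] P(3) e by simp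
    moreover have "hd (P @ [v]) = x" using P ne by simp
    moreover have "last (P @ [v]) = v" by simp
    moreover have "length (P @ [v]) = Suc (Suc (gdist E x u))" using P by simp
    ultimately show ?thesis by (rule gdist_le_path)
  qed
qed

lemma clique_card:
  assumes g: "graph V E" and c: "connected_on V E" and r: "resolving_set V E R"
    and K: "K \<subseteq> V" "clique E K"
  shows "card K \<le> 2 ^ card R"
proof (cases "K = {}")
  case True then show ?thesis by simp
next
  case False
  have fin: "finite V" using g unfolding graph_def by auto
  have RV: "R \<subseteq> V" using r unfolding resolving_set_def by auto
  have finR: "finite R" using RV fin finite_subset by blast
  have finK: "finite K" using K fin finite_subset by blast
  have sym: "\<And>x y. E x y \<Longrightarrow> E y x" using g unfolding graph_def by auto
  define m where "m x = Min ((gdist E x) ` K)" for x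
  have bnd: "m x \<le> gdist E x u \<and> gdist E x u \<le> Suc (m x)" if "x \<in> R" "u \<in> K" for x u
  proof -
    have "Min ((gdist E x) ` K) \<in> (gdist E x) ` K" using finK False by (intro Min_in) auto
    then obtain u0 where u0: "u0 \<in> K" "gdist E x u0 = m x" using m_def by auto
    have "gdist E x u \<le> Suc (gdist E x u0)"
    proof (cases "u = u0")
      case True then show ?thesis by simp
    next
      case False
      then have "E u0 u" using K u0 that unfolding clique_def by auto
      then show ?thesis using gdist_step[OF c g] that RV by auto
    qed
    moreover have "m x \<le> gdist E x u" using that finK m_def by auto
    ultimately show ?thesis using u0 by simp
  qed
  define f where "f u = {x\<in>R. gdist E x u \<noteq> m x}" for u
  have "inj_on f K"
  proof (rule inj_onI, rule ccontr)
    fix u v assume u: "u \<in> K" and v: "v \<in> K" and fe: "f u = f v" and uv: "u \<noteq> v"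
    obtain x where x: "x \<in> R" "gdist E x u \<noteq> gdist E x v"
      using r u v uv K unfolding resolving_set_def by blast
    have "(x \<in> f u) = (x \<in> f v)" using fe by simp
    then show False using bnd[OF x(1) u] bnd[OF x(1) v] x unfolding f_def by auto
  qed
  moreover have "f ` K \<subseteq> Pow R" unfolding f_def by auto
  ultimately have "card K \<le> card (Pow R)"
    by (metis card_image card_mono finR finite_Pow_iff)
  then show ?thesis using finR by (simp add: card_Pow)
qed

theorem mainTheorem4:
  fixes V :: "'a set" and E :: "'a \<Rightarrow> 'a \<Rightarrow> bool" and R :: "'a set" and k w :: nat
  assumes "graph V E" and "connected_on V E" and "chordal V E"
    and "treewidth V E = w"
    and "resolving_set V E R" and "card R = k"
  shows "w \<le> 3 ^ k"
proof -
  obtain N T B where td: "tree_decomposition V E N T B" and cl: "\<forall>t\<in>N. clique E (B t)"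
    using clique_decomp[OF assms(1,3)] by blast
  have tr: "is_tree N T" and BV: "\<forall>t\<in>N. B t \<subseteq> V" using td unfolding tree_decomposition_def by auto
  have finN: "finite N" and neN: "N \<noteq> {}" using tr unfolding is_tree_def graph_def by auto
  have "w \<le> decomp_width N B"
    using assms(4) td unfolding treewidth_def by (metis (mono_tags, lifting) Least_le)
  moreover have "Max ((\<lambda>t. card (B t)) ` N) \<le> 2 ^ k"
    using finN neN clique_card[OF assms(1,2,5)] BV cl assms(6) by (auto simp: Max_le_iff)
  moreover have "(2::nat) ^ k \<le> 3 ^ k" by (simp add: power_mono)
  ultimately show ?thesis unfolding decomp_width_def by linarith
qed

end
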